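(* Suppose $\beta_-\ne0$ and $\gamma_->0$, and let $J\subset]0,b[$ be an interval. 1. If $\beta_-<0$ and the curve $\overline\Delta(x,y)=0$ lies above (resp. below) the curve $y=\Pi(x)$ for all $x\in J$, then $\Delta(x)>0$ and $\tilde I'(x)>0$ (resp. $\Delta(x)<0$ and $\tilde I'(x)<0$) for all $x\in J$. 2. If $\beta_->0$ and the curve $\overline\Delta(x,y)=0$ lies above (resp. below) the curve $y=\Pi(x)$ for all $x\in J$, then $\Delta(x)<0$ and $\tilde I'(x)<0$ (resp. $\Delta(x)>0$ and $\tilde I'(x)>0$) for all $x\in J$.
   Context: Real parameters $B,\alpha_+,\beta_+,\gamma_+,\delta_+,\beta_-,\gamma_-$ with $B>\delta_+>0$. $Z^-(x,y)=(-1+\beta_- y,\,-x+\gamma_- y)$, $X^{sl}(u)=\frac{1}{1+\delta_+}(B-\delta_++\alpha_+u)$, and $x^*=-(B-\delta_+)/\alpha_+$ when $\alpha_+\ne0$. Poincaré half-map $\Pi$: for $x>0$, $(\Pi(x),0)$ with $\Pi(x)<0$ is the first return to $\{y=0\}$ of the forward $Z^-$-orbit through $(x,0)$; $\Pi(0)=0$. $[0,b[$ is the largest interval of this form in the domain of $\Pi$ such that $X^{sl}>0$ on $[\Pi(x),x]$ for all $x\in[0,b[$. Define $\tilde I(x)=\int_{\Pi(x)}^x\frac{u\,du}{X^{sl}(u)}$ on $[0,b[$, $\overline\Delta(x,y)=\alpha_+\beta_-xy+\beta_-(B-\delta_+)(x+y)-\alpha_+-\gamma_-(B-\delta_+)$,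 and $\Delta(x)=\overline\Delta(x,\Pi(x))$. "The curve $\overline\Delta=0$ lies above (below) $y=\Pi(x)$ for $x\in J$" means: for each $x\in J$, every $y$ with $\overline\Delta(x,y)=0$ satisfies $y>\Pi(x)$ (resp. $y<\Pi(x)$). *)

theory Defs
  imports "HOL-Analysis.Analysis"
begin

definition Zm :: "real \<Rightarrow> real \<Rightarrow> real \<times> real \<Rightarrow> real \<times> real" where
  "Zm bm gm p = (-1 + bm * snd p, - fst p + gm * snd p)"

definition first_return :: "real \<Rightarrow> real \<Rightarrow> real \<Rightarrow> real \<Rightarrow> bool" where
  "first_return bm gm x y \<longleftrightarrow> y < 0 \<and>
     (\<exists>(\<phi>::real \<Rightarrow> real \<times> real) t. 0 < t \<and> \<phi> 0 = (x, 0) \<and> \<phi> t = (y, 0) \<and>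
        (\<forall>s\<in>{0..t}. (\<phi> has_vector_derivative Zm bm gm (\<phi> s)) (at s within {0..t})) \<and>
        (\<forall>s\<in>{0<..<t}. snd (\<phi> s) \<noteq> 0))"

definition PiDom :: "real \<Rightarrow> real \<Rightarrow> real set" where
  "PiDom bm gm = {x. x = 0 \<or> (0 < x \<and> (\<exists>y. first_return bm gm x y))}"

definition Pi :: "real \<Rightarrow> real \<Rightarrow> real \<Rightarrow> real" where
  "Pi bm gm x = (if x = 0 then 0 else (THE y. first_return bm gm x y))"

definition Xsl :: "real \<Rightarrow> real \<Rightarrow> real \<Rightarrow> real \<Rightarrow> real" where
  "Xsl B ap dp u = (B - dp + ap * u) / (1 + dp)"

definition goodset :: "real \<Rightarrow> real \<Rightarrow> real \<Rightarrow> real \<Rightarrow> real \<Rightarrow> real set" where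
  "goodset B ap dp bm gm =
     {x \<in> PiDom bm gm. \<forall>u\<in>{Pi bm gm x..x}. 0 < Xsl B ap dp u}"

text \<open>Membership in ]0,b[, where [0,b[ is the largest interval of the form [0,c[
  (c possibly +infinity) contained in the good set.\<close>
definition in_zero_b :: "real \<Rightarrow> real \<Rightarrow> real \<Rightarrow> real \<Rightarrow> real \<Rightarrow> real \<Rightarrow> bool" where
  "in_zero_b B ap dp bm gm x \<longleftrightarrow>
     0 < x \<and> (\<exists>c > x. {0..<c} \<subseteq> goodset B ap dp bm gm)"

definition Itilde :: "real \<Rightarrow> real \<Rightarrow> real \<Rightarrow> real \<Rightarrow> real \<Rightarrow> real \<Rightarrow> real" where
  "Itilde B ap dp bm gm x = integral {Pi bm gm x..x} (\<lambda>u. u / Xsl B ap dp u)"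

definition Deltabar :: "real \<Rightarrow> real \<Rightarrow> real \<Rightarrow> real \<Rightarrow> real \<Rightarrow> real \<Rightarrow> real \<Rightarrow> real" where
  "Deltabar B ap dp bm gm x y =
     ap * bm * x * y + bm * (B - dp) * (x + y) - ap - gm * (B - dp)"

definition Delta :: "real \<Rightarrow> real \<Rightarrow> real \<Rightarrow> real \<Rightarrow> real \<Rightarrow> real \<Rightarrow> real" where
  "Delta B ap dp bm gm x = Deltabar B ap dp bm gm x (Pi bm gm x)"

end

theory Submission
  imports Defs
begin


lemma sc0: "\<exists>\<sigma> c. \<sigma> 0 = 0 \<and> c 0 = 1 \<and> (\<forall>s. (\<sigma> has_real_derivative c s) (at s)) \<and>
   (\<forall>s. (c has_real_derivative k * \<sigma> s) (at s))"
proof (cases "k > 0")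
  case True
  define w where "w = sqrt k"
  have w: "w > 0" "w * w = k" using True by (auto simp: w_def)
  show ?thesis
    apply (rule exI[of _ "\<lambda>s. sinh (w * s) / w"], rule exI[of _ "\<lambda>s. cosh (w * s)"])
    using w by (auto intro!: derivative_eq_intros simp: field_simps)
next
  case False
  show ?thesis
  proof (cases "k = 0")
    case True
    show ?thesis
      apply (rule exI[of _ "\<lambda>s. s"], rule exI[of _ "\<lambda>s. 1"])
      using True by (auto intro!: derivative_eq_intros)
  next
    case False
    define w where "w = sqrt (-k)"
    have w: "w > 0" "k = -(w * w)" using False \<open>\<not> k > 0\<close> by (auto simp: w_def)
    show ?thesis
      apply (rule exI[of _ "\<lambda>s. sin (w * s) / w"], rule exI[of _ "\<lambda>s. cos (w * s)"])
      using w(1) by (auto intro!: derivative_eq_intros simp: field_simps w(2))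
  qed
qed

lemma sc1: "\<exists>S C. S 0 = 0 \<and> C 0 = 1 \<and> (\<forall>s. (S has_real_derivative C s) (at s)) \<and>
   (\<forall>s. (C has_real_derivative g * C s - b * S s) (at s))"
proof -
  obtain \<sigma> c where h: "\<sigma> 0 = 0" "c 0 = 1" "\<And>s. (\<sigma> has_real_derivative c s) (at s)"
    "\<And>s. (c has_real_derivative (g*g/4 - b) * \<sigma> s) (at s)"
    using sc0[of "g*g/4 - b"] by blast
  show ?thesis
    apply (rule exI[of _ "\<lambda>s. exp (g * s / 2) * \<sigma> s"], rule exI[of _ "\<lambda>s. exp (g * s / 2) * (g/2 * \<sigma> s + c s)"])
    using h by (auto intro!: derivative_eq_intros simp: field_simps)
qed



lemma vd_fst: "(\<phi> has_vector_derivative d) F \<Longrightarrow> ((\<lambda>s. fst (\<phi> s)) has_real_derivative fst d) F"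
  unfolding has_vector_derivative_def has_field_derivative_def
  by (drule has_derivative_fst) (simp add: mult_commute_abs)

lemma vd_snd: "(\<phi> has_vector_derivative d) F \<Longrightarrow> ((\<lambda>s. snd (\<phi> s)) has_real_derivative snd d) F"
  unfolding has_vector_derivative_def has_field_derivative_def
  by (drule has_derivative_snd) (simp add: mult_commute_abs)

definition SCp :: "real \<Rightarrow> real \<Rightarrow> (real \<Rightarrow> real) \<times> (real \<Rightarrow> real)" where
  "SCp b g = (SOME p. fst p 0 = 0 \<and> snd p 0 = 1 \<and> (\<forall>s. (fst p has_real_derivative snd p s) (at s)) \<and>
   (\<forall>s. (snd p has_real_derivative g * snd p s - b * fst p s) (at s)))"

definition "Sf b g = fst (SCp b g)"
definition "Cf b g = snd (SCp b g)"

lemma SC: "Sf b g 0 = 0" "Cf b g 0 = 1" "(Sf b g has_real_derivative Cf b g s) (at s)"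
  "(Cf b g has_real_derivative g * Cf b g s - b * Sf b g s) (at s)"
proof -
  obtain S C where "S 0 = 0 \<and> C 0 = 1 \<and> (\<forall>s. (S has_real_derivative C s) (at s)) \<and>
   (\<forall>s. (C has_real_derivative g * C s - b * S s) (at s))" using sc1 by blast
  then have "fst (S,C) 0 = 0 \<and> snd (S,C) 0 = 1 \<and> (\<forall>s. (fst (S,C) has_real_derivative snd (S,C) s) (at s)) \<and>
   (\<forall>s. (snd (S,C) has_real_derivative g * snd (S,C) s - b * fst (S,C) s) (at s))" by simp
  from someI[of "\<lambda>p. fst p 0 = 0 \<and> snd p 0 = 1 \<and> (\<forall>s. (fst p has_real_derivative snd p s) (at s)) \<and>
   (\<forall>s. (snd p has_real_derivative g * snd p s - b * fst p s) (at s))", OF this]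
  show "Sf b g 0 = 0" "Cf b g 0 = 1" "(Sf b g has_real_derivative Cf b g s) (at s)"
  "(Cf b g has_real_derivative g * Cf b g s - b * Sf b g s) (at s)"
    unfolding Sf_def Cf_def SCp_def[symmetric] by auto
qed

definition "vv b g x s = (1 - Cf b g s + g * Sf b g s) / b - x * Sf b g s"
definition "uu b g x s = g * vv b g x s - (Sf b g s - x * Cf b g s)"

lemma vv_deriv: "b \<noteq> 0 \<Longrightarrow> (vv b g x has_real_derivative (Sf b g s - x * Cf b g s)) (at s)"
  unfolding vv_def[abs_def]
  by (auto intro!: derivative_eq_intros SC(3,4) simp: field_simps)

lemma uu_deriv: "b \<noteq> 0 \<Longrightarrow> (uu b g x has_real_derivative (-1 + b * vv b g x s)) (at s)"
  unfolding uu_def[abs_def]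
  by (auto intro!: derivative_eq_intros vv_deriv SC(3,4) simp: vv_def field_simps)

lemma vv0: "vv b g x 0 = 0" and uu0: "uu b g x 0 = x"
  by (simp_all add: vv_def uu_def SC)

lemma quad_bound: "-(2*\<bar>b\<bar> + 2*\<bar>g\<bar> + 2) * (p*p + q*q) + 2*p*(b*q) + 2*q*(-p + g*q) \<le> (0::real)"
proof -
  define P where "P = p*p+q*q"
  have h1: "2*((b-1)*(p*q)) \<le> \<bar>b-1\<bar>*P"
  proof (cases "b \<ge> 1")
    case True
    have "0 \<le> (b-1)*((p-q)*(p-q))" using True by simp
    then show ?thesis using True by (simp add: algebra_simps P_def)
  next
    case False
    have "0 \<le> (1-b)*((p+q)*(p+q))" using False by simp
    then show ?thesis using False by (simp add: algebra_simps P_def)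
  qed
  have h2: "g*(q*q) \<le> \<bar>g\<bar>*P"
  proof -
    have "g*(q*q) \<le> \<bar>g\<bar>*(q*q)" by (simp add: mult_right_mono)
    also have "\<dots> \<le> \<bar>g\<bar>*P" unfolding P_def by (simp add: mult_left_mono)
    finally show ?thesis by simp
  qed
  have h3: "\<bar>b-1\<bar>*P \<le> \<bar>b\<bar>*P + P"
  proof -
    have "\<bar>b-1\<bar>*P \<le> (\<bar>b\<bar> + 1)*P" unfolding P_def by (simp add: mult_right_mono)
    then show ?thesis by (simp add: algebra_simps)
  qed
  have eq: "-(2*\<bar>b\<bar> + 2*\<bar>g\<bar> + 2) * (p*p + q*q) + 2*p*(b*q) + 2*q*(-p + g*q)
     = -2*(\<bar>b\<bar>*P) - 2*(\<bar>g\<bar>*P) - 2*P + 2*((b-1)*(p*q)) + 2*(g*(q*q))"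
    unfolding P_def by (simp add: algebra_simps)
  have h4: "0 \<le> P" "0 \<le> \<bar>b\<bar>*P" unfolding P_def by simp_all
  show ?thesis unfolding eq using h1 h2 h3 h4 by linarith
qed

lemma ode_unique:
  assumes b: "b \<noteq> 0" and init: "\<phi> 0 = (x, 0)"
    and der: "\<forall>s\<in>{0..t}. (\<phi> has_vector_derivative Zm b g (\<phi> s)) (at s within {0..t})"
    and s: "s \<in> {0..t}"
  shows "\<phi> s = (uu b g x s, vv b g x s)"
proof -
  define p where "p s = fst (\<phi> s) - uu b g x s" for s
  define q where "q s = snd (\<phi> s) - vv b g x s" for s
  define K where "K = 2*\<bar>b\<bar> + 2*\<bar>g\<bar> + 2"
  define E where "E s = exp (-K * s) * (p s * p s + q s * q s)" for s
  define E' where "E' s = exp (-K * s) * (-K * (p s * p s + q s * q s) + 2 * p s * (b * q s) + 2 * q s * (- p s + g * q s))" for s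
  have dp: "(p has_real_derivative b * q r) (at r within {0..t})" if "r \<in> {0..t}" for r
  proof -
    have "((\<lambda>s. fst (\<phi> s)) has_real_derivative fst (Zm b g (\<phi> r))) (at r within {0..t})"
      using der that vd_fst by blast
    moreover have "(uu b g x has_real_derivative (-1 + b * vv b g x r)) (at r within {0..t})"
      using uu_deriv[OF b] has_field_derivative_at_within by blast
    ultimately have "(p has_real_derivative fst (Zm b g (\<phi> r)) - (-1 + b * vv b g x r)) (at r within {0..t})"
      unfolding p_def[abs_def] by (rule DERIV_diff)
    then show ?thesis by (simp add: Zm_def q_def algebra_simps)
  qed
  have dq: "(q has_real_derivative - p r + g * q r) (at r within {0..t})" if "r \<in> {0..t}" for r
  proof -
    have "((\<lambda>s. snd (\<phi> s)) has_real_derivative snd (Zm b g (\<phi> r))) (at r within {0..t})"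
      using der that vd_snd by blast
    moreover have "(vv b g x has_real_derivative (Sf b g r - x * Cf b g r)) (at r within {0..t})"
      using vv_deriv[OF b] has_field_derivative_at_within by blast
    ultimately have "(q has_real_derivative snd (Zm b g (\<phi> r)) - (Sf b g r - x * Cf b g r)) (at r within {0..t})"
      unfolding q_def[abs_def] by (rule DERIV_diff)
    then show ?thesis by (simp add: Zm_def p_def q_def uu_def algebra_simps)
  qed
  have dE: "(E has_real_derivative E' r) (at r within {0..t})" if "r \<in> {0..t}" for r
    unfolding E_def[abs_def] E'_def
    by (rule derivative_eq_intros dp dq that refl)+ (simp add: algebra_simps)
  have E'le: "E' r \<le> 0" for r
    unfolding E'_def K_def using quad_bound[of b g "p r" "q r"]
    by (simp add: mult_nonneg_nonpos)
  have cont: "continuous_on {0..t} E"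
    apply (rule continuous_on_vector_derivative)
    apply (subst has_real_derivative_iff_has_vector_derivative[symmetric])
    by (rule dE)
  have "(\<lambda>r. - E r) 0 \<le> (\<lambda>r. - E r) s"
  proof (rule DERIV_nonneg_imp_increasing_open[where f="\<lambda>r. - E r"])
    show "0 \<le> s" using s by simp
    fix r assume r: "0 < r" "r < s"
    have "(E has_real_derivative E' r) (at r)"
      using dE[of r] r s at_within_Icc_at[of 0 r t] by auto
    then show "\<exists>y. ((\<lambda>r. - E r) has_real_derivative y) (at r) \<and> 0 \<le> y"
      using E'le[of r] by (intro exI[of _ "- E' r"]) (auto intro: DERIV_minus)
  next
    show "continuous_on {0..s} (\<lambda>r. - E r)"
      using cont s by (auto intro: continuous_on_minus continuous_on_subset)
  qed
  moreover have "E 0 = 0" using init by (simp add: E_def p_def q_def uu0 vv0)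
  moreover have "E s \<ge> 0" by (simp add: E_def)
  ultimately have "E s = 0" by simp
  then have "p s * p s + q s * q s = 0" by (simp add: E_def)
  then have "p s = 0 \<and> q s = 0" by (simp add: sum_squares_eq_zero_iff)
  then show ?thesis by (simp add: p_def q_def prod_eq_iff)
qed



lemma exp_growth:
  fixes f :: "real \<Rightarrow> real"
  assumes "\<And>s. (f has_real_derivative c * f s) (at s)"
  shows "f s = exp (c * s) * f 0"
proof -
  define h where "h s = exp (- c * s) * f s" for s
  have "(h has_real_derivative 0) (at r)" for r
    unfolding h_def[abs_def]
    by (auto intro!: derivative_eq_intros assms simp: algebra_simps)
  then have "h s = h 0" using DERIV_isconst_all by blast
  then show ?thesis by (simp add: h_def exp_minus field_simps)
qed

lemma vv_deriv': "b \<noteq> 0 \<Longrightarrow> (vv b g x has_real_derivative (g * vv b g x s - uu b g x s)) (at s)"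
  using vv_deriv[of b g x s] by (simp add: uu_def)

definition "Wq b g u = b*u*u - g*u + 1"

lemma Q_inv:
  assumes b: "b \<noteq> 0"
    and v: "vv b g x t = 0"
  shows "Wq b g (uu b g x t) = exp (g*t) * Wq b g x"
proof -
  define Q where "Q s = b * ((uu b g x s - g/b)^2 - g*(uu b g x s - g/b)*(vv b g x s - 1/b) + b*(vv b g x s - 1/b)^2)" for s
  have d: "(Q has_real_derivative g * Q s) (at s)" for s
  proof -
    have "(Q has_real_derivative b * (2*(uu b g x s - g/b)*(-1 + b * vv b g x s)
       - g*((-1 + b * vv b g x s)*(vv b g x s - 1/b) + (uu b g x s - g/b)*(g * vv b g x s - uu b g x s))
       + b*(2*(vv b g x s - 1/b)*(g * vv b g x s - uu b g x s)))) (at s)"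
      unfolding Q_def[abs_def]
      by (auto intro!: derivative_eq_intros uu_deriv vv_deriv' b simp: algebra_simps power2_eq_square)
    moreover have "b * (2*(uu b g x s - g/b)*(-1 + b * vv b g x s)
       - g*((-1 + b * vv b g x s)*(vv b g x s - 1/b) + (uu b g x s - g/b)*(g * vv b g x s - uu b g x s))
       + b*(2*(vv b g x s - 1/b)*(g * vv b g x s - uu b g x s))) = g * Q s"
      unfolding Q_def using b by (simp add: field_simps power2_eq_square)
    ultimately show ?thesis by simp
  qed
  have "Q t = exp (g*t) * Q 0" by (rule exp_growth[OF d])
  moreover have "Q 0 = Wq b g x" unfolding Q_def Wq_def using b
    by (simp add: uu0 vv0 field_simps power2_eq_square)
  moreover have "vv b g x t = 0 \<Longrightarrow> Q t = Wq b g (uu b g x t)" unfolding Q_def Wq_def using b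
    by (simp add: field_simps power2_eq_square)
  ultimately show ?thesis using v by (simp add: uu0)
qed

lemma lin_inv:
  assumes b: "b \<noteq> 0" and l: "l*l - g*l + b = 0"
    and v: "vv b g x t = 0"
  shows "uu b g x t - (g - l)/b = exp (l*t) * (x - (g-l)/b)"
proof -
  define f where "f s = (uu b g x s - g/b) - l*(vv b g x s - 1/b)" for s
  have d: "(f has_real_derivative l * f s) (at s)" for s
  proof -
    have "(f has_real_derivative (-1 + b * vv b g x s) - l * (g * vv b g x s - uu b g x s)) (at s)"
      unfolding f_def[abs_def]
      by (auto intro!: derivative_eq_intros uu_deriv vv_deriv' b)
    moreover have "(-1 + b * vv b g x s) - l * (g * vv b g x s - uu b g x s) = l * f s"
    proof -
      have "(-1 + b * vv b g x s) - l * (g * vv b g x s - uu b g x s) - l * f s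
        = -1 + vv b g x s * (l*l - g*l + b) + (l*g - l*l)/b"
        unfolding f_def using b by (simp add: field_simps)
      also have "\<dots> = 0" using l b by (simp add: field_simps)
      finally show ?thesis by simp
    qed
    ultimately show ?thesis by simp
  qed
  have "f t = exp (l*t) * f 0" by (rule exp_growth[OF d])
  moreover have "f 0 = uu b g x 0 - (g - l)/b" unfolding f_def using b
    by (simp add: uu0 vv0 field_simps)
  moreover have "vv b g x t = 0 \<Longrightarrow> f t = uu b g x t - (g - l)/b" unfolding f_def using b
    by (simp add: field_simps)
  ultimately show ?thesis using v by (simp add: uu0)
qed



lemma fr_char:
  assumes b: "b \<noteq> 0" and fr: "first_return b g x y"
  shows "\<exists>t>0. vv b g x t = 0 \<and> y = uu b g x t \<and> (\<forall>s\<in>{0<..<t}. vv b g x s \<noteq> 0) \<and> y < 0"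
proof -
  from fr obtain \<phi> t where y: "y < 0" and t: "0 < t" and i: "\<phi> 0 = (x, 0)" and e: "\<phi> t = (y, 0)"
    and d: "\<forall>s\<in>{0..t}. (\<phi> has_vector_derivative Zm b g (\<phi> s)) (at s within {0..t})"
    and nz: "\<forall>s\<in>{0<..<t}. snd (\<phi> s) \<noteq> 0"
    unfolding first_return_def by blast
  have eq: "\<phi> s = (uu b g x s, vv b g x s)" if "s \<in> {0..t}" for s
    using ode_unique[OF b i d that] .
  have et: "\<phi> t = (uu b g x t, vv b g x t)" using eq[of t] t by simp
  have "vv b g x t = 0" "y = uu b g x t" using et e by auto
  moreover have "\<forall>s\<in>{0<..<t}. vv b g x s \<noteq> 0"
  proof
    fix s assume s: "s \<in> {0<..<t}"
    then have "\<phi> s = (uu b g x s, vv b g x s)" using eq[of s] by simp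
    then show "vv b g x s \<noteq> 0" using nz s by (metis snd_conv)
  qed
  ultimately show ?thesis using t y by blast
qed

definition "Tr b g x = (SOME t. 0 < t \<and> vv b g x t = 0 \<and> (\<forall>s\<in>{0<..<t}. vv b g x s \<noteq> 0))"

lemma Tr_unique:
  assumes "0 < t1 \<and> vv b g x t1 = 0 \<and> (\<forall>s\<in>{0<..<t1}. vv b g x s \<noteq> 0)"
    and "0 < t2 \<and> vv b g x t2 = 0 \<and> (\<forall>s\<in>{0<..<t2}. vv b g x s \<noteq> 0)"
  shows "t1 = t2"
  using assms by (cases t1 t2 rule: linorder_cases) auto

lemma Tr_char:
  assumes "0 < t \<and> vv b g x t = 0 \<and> (\<forall>s\<in>{0<..<t}. vv b g x s \<noteq> 0)"
  shows "Tr b g x = t"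
proof -
  have "0 < Tr b g x \<and> vv b g x (Tr b g x) = 0 \<and> (\<forall>s\<in>{0<..<Tr b g x}. vv b g x s \<noteq> 0)"
    unfolding Tr_def using someI[of "\<lambda>t. 0 < t \<and> vv b g x t = 0 \<and> (\<forall>s\<in>{0<..<t}. vv b g x s \<noteq> 0)", OF assms] .
  then show ?thesis using Tr_unique[OF _ assms] by blast
qed

lemma Pi_char:
  assumes b: "b \<noteq> 0" and fr: "first_return b g x y" and x: "x \<noteq> 0"
  shows "Pi b g x = y \<and> y = uu b g x (Tr b g x) \<and> 0 < Tr b g x \<and> vv b g x (Tr b g x) = 0
     \<and> (\<forall>s\<in>{0<..<Tr b g x}. vv b g x s \<noteq> 0) \<and> y < 0"
proof -
  obtain t where t: "0 < t \<and> vv b g x t = 0 \<and> y = uu b g x t \<and> (\<forall>s\<in>{0<..<t}. vv b g x s \<noteq> 0) \<and> y < 0"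
    using fr_char[OF b fr] by (elim exE conjE) (intro that conjI)
  have T: "Tr b g x = t" using t by (intro Tr_char) simp
  have all: "y' = y" if fr': "first_return b g x y'" for y'
  proof -
    obtain t' where t': "0 < t' \<and> vv b g x t' = 0 \<and> y' = uu b g x t' \<and> (\<forall>s\<in>{0<..<t'}. vv b g x s \<noteq> 0) \<and> y' < 0"
      using fr_char[OF b fr'] by (elim exE conjE) (intro that conjI)
    have "t' = t" using t t' by (intro Tr_unique[where b=b and g=g and x=x]) simp_all
    then show ?thesis using t t' by simp
  qed
  have "(THE y. first_return b g x y) = y"
    by (rule the_equality) (rule fr, rule all)
  then have "Pi b g x = y" unfolding Pi_def using x by simp
  then show ?thesis using t T by simp
qed

lemma W_pos:
  assumes b: "b \<noteq> 0" and g: "g > 0" and x: "x > 0" and v: "vv b g x t = 0" and y: "uu b g x t < 0"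
  shows "Wq b g x > 0"
proof (cases "b > 0")
  case True
  have "Wq b g (uu b g x t) = exp (g*t) * Wq b g x" using Q_inv[OF b v] .
  moreover have "Wq b g (uu b g x t) > 0"
  proof -
    have "b * uu b g x t * uu b g x t \<ge> 0" using True by (simp add: mult.assoc mult_nonneg_nonneg)
    moreover have "- g * uu b g x t > 0" using g y by (simp add: mult_pos_neg)
    ultimately show ?thesis unfolding Wq_def by linarith
  qed
  ultimately show ?thesis by (metis exp_gt_zero zero_less_mult_pos)
next
  case False
  then have bn: "b < 0" using b by simp
  define d where "d = g*g - 4*b"
  have d: "d > 0"
  proof -
    have "0 \<le> g*g" by simp
    then show ?thesis using bn unfolding d_def by linarith
  qed
  define l1 where "l1 = (g + sqrt d)/2"
  define l2 where "l2 = (g - sqrt d)/2"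
  have sq: "sqrt d * sqrt d = d" using d by simp
  have l1: "l1*l1 - g*l1 + b = 0"
  proof -
    have "l1*l1 - g*l1 + b = (sqrt d * sqrt d - g*g)/4 + b" unfolding l1_def by (simp add: algebra_simps add_divide_distrib diff_divide_distrib)
    then show ?thesis by (simp only: sq) (simp add: d_def)
  qed
  have l2: "l2*l2 - g*l2 + b = 0"
  proof -
    have "l2*l2 - g*l2 + b = (sqrt d * sqrt d - g*g)/4 + b" unfolding l2_def by (simp add: algebra_simps add_divide_distrib diff_divide_distrib)
    then show ?thesis by (simp only: sq) (simp add: d_def)
  qed
  define y where "y = uu b g x t"
  define r1 where "r1 = (g - l1)/b"
  define r2 where "r2 = (g - l2)/b"
  have e1: "y - r1 = exp (l1*t) * (x - r1)" using lin_inv[OF b l1 v] by (simp add: y_def r1_def)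
  have e2: "y - r2 = exp (l2*t) * (x - r2)" using lin_inv[OF b l2 v] by (simp add: y_def r2_def)
  have yneg: "y < 0" using y by (simp add: y_def)
  have p1: "(x - r1) * (y - r1) > 0"
  proof -
    have "x - r1 \<noteq> 0" using e1 yneg x by auto
    then have "(x - r1) * (x - r1) > 0" by (metis not_real_square_gt_zero)
    moreover have "(x - r1)*(y - r1) = exp (l1*t) * ((x - r1)*(x - r1))" unfolding e1 by (simp only: mult.left_commute)
    ultimately show ?thesis by (metis exp_gt_zero mult_pos_pos)
  qed
  have p2: "(x - r2) * (y - r2) > 0"
  proof -
    have "x - r2 \<noteq> 0" using e2 yneg x by auto
    then have "(x - r2) * (x - r2) > 0" by (metis not_real_square_gt_zero)
    moreover have "(x - r2)*(y - r2) = exp (l2*t) * ((x - r2)*(x - r2))" unfolding e2 by (simp only: mult.left_commute)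
    ultimately show ?thesis by (metis exp_gt_zero mult_pos_pos)
  qed
  have sum: "l1 + l2 = g" unfolding l1_def l2_def by (simp add: field_simps)
  have prod: "l1 * l2 = b"
  proof -
    have "l1 * l2 = (g*g - sqrt d * sqrt d)/4" unfolding l1_def l2_def by (simp add: algebra_simps add_divide_distrib diff_divide_distrib)
    then show ?thesis by (simp only: sq) (simp add: d_def)
  qed
  have rp: "r1 * r2 = 1/b" unfolding r1_def r2_def
  proof -
    have "(g - l1) * (g - l2) = b" 
    proof -
      have e: "g - l1 = l2" "g - l2 = l1" using sum by auto
      have "(g - l1) * (g - l2) = l2 * l1" by (simp only: e)
      then show ?thesis using prod by (simp add: mult.commute)
    qed
    then show "(g - l1) / b * ((g - l2) / b) = 1 / b" using b by (simp add: field_simps)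
  qed
  have rs: "r1 + r2 = g/b"
  proof -
    have "r1 + r2 = ((g - l1) + (g - l2))/b" unfolding r1_def r2_def by (rule add_divide_distrib[symmetric])
    also have "(g - l1) + (g - l2) = g" using sum by simp
    finally show ?thesis .
  qed
  have W: "Wq b g x = b * ((x - r1) * (x - r2))"
  proof -
    have "b * ((x - r1) * (x - r2)) = b * (x*x - (r1+r2)*x + r1*r2)" by (simp add: algebra_simps)
    also have "\<dots> = b*x*x - g*x + 1" unfolding rs rp using b by (simp add: field_simps)
    finally show ?thesis unfolding Wq_def by simp
  qed
  have "r1 * r2 < 0" using rp bn by simp
  then have "(x - r1) * (x - r2) < 0"
  proof (cases "r1 < 0")
    case True
    then have "r2 > 0" using \<open>r1 * r2 < 0\<close> by (auto simp: mult_less_0_iff)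
    have "x - r1 > 0" using True x by simp
    have "y - r2 < 0" using \<open>r2 > 0\<close> yneg by simp
    then have "x - r2 < 0" using p2 by (auto simp: zero_less_mult_iff)
    then show ?thesis using \<open>x - r1 > 0\<close> by (simp add: mult_pos_neg)
  next
    case False
    then have "r1 > 0" using \<open>r1 * r2 < 0\<close> by (cases "r1 = 0") auto
    then have "r2 < 0" using \<open>r1 * r2 < 0\<close> by (auto simp: mult_less_0_iff)
    have "x - r2 > 0" using \<open>r2 < 0\<close> x by simp
    have "y - r1 < 0" using \<open>r1 > 0\<close> yneg by simp
    then have "x - r1 < 0" using p1 by (auto simp: zero_less_mult_iff)
    then show ?thesis using \<open>x - r2 > 0\<close> by (simp add: mult_neg_pos)
  qed
  then show ?thesis using W bn by (simp add: mult_neg_neg)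
qed



lemma vv_shift: "vv b g x' s = vv b g x s - (x' - x) * Sf b g s"
  by (simp add: vv_def algebra_simps)

lemma vv_cont: "b \<noteq> 0 \<Longrightarrow> continuous_on A (vv b g x)"
  by (rule continuous_at_imp_continuous_on) (metis DERIV_isCont vv_deriv)

lemma S_cont: "continuous_on A (Sf b g)"
  by (rule continuous_at_imp_continuous_on) (metis DERIV_isCont SC(3))

lemma small_s:
  assumes b: "b \<noteq> 0" and x: "0 < x"
  shows "\<exists>d>0. \<forall>x' s. x/2 \<le> x' \<longrightarrow> 0 < s \<longrightarrow> s \<le> d \<longrightarrow> vv b g x' s < 0"
proof -
  have c1: "isCont (\<lambda>s. Sf b g s - x/2 * Cf b g s) 0"
    using DERIV_isCont[OF SC(3)] DERIV_isCont[OF SC(4)] by (intro continuous_intros) auto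
  have c2: "isCont (Cf b g) 0" using DERIV_isCont[OF SC(4)] by auto
  have t1: "((\<lambda>s. Sf b g s - x/2 * Cf b g s) \<longlongrightarrow> (Sf b g 0 - x/2 * Cf b g 0)) (nhds 0)"
    using c1 tendsto_at_iff_tendsto_nhds[of "\<lambda>s. Sf b g s - x/2 * Cf b g s" 0] unfolding isCont_def by simp
  have t2: "(Cf b g \<longlongrightarrow> Cf b g 0) (nhds 0)"
    using c2 tendsto_at_iff_tendsto_nhds[of "Cf b g" 0] unfolding isCont_def by simp
  have "eventually (\<lambda>s. Sf b g s - x/2 * Cf b g s < 0) (nhds 0)"
    using order_tendstoD(2)[OF t1, of 0] x by (simp add: SC)
  moreover have "eventually (\<lambda>s. Cf b g s > 0) (nhds 0)"
    using order_tendstoD(1)[OF t2, of 0] by (simp add: SC)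
  ultimately have "eventually (\<lambda>s. Sf b g s - x/2 * Cf b g s < 0 \<and> Cf b g s > 0) (nhds 0)"
    by (rule eventually_conj)
  then obtain d where d: "d > 0" and dd: "\<And>s. dist s 0 < d \<Longrightarrow> Sf b g s - x/2 * Cf b g s < 0 \<and> Cf b g s > 0"
    unfolding eventually_nhds_metric by blast
  show ?thesis
  proof (intro exI[of _ "d/2"] conjI allI impI)
    show "0 < d/2" using d by simp
    fix x' s assume x': "x/2 \<le> x'" and s: "0 < s" "s \<le> d/2"
    have "vv b g x' s < vv b g x' 0"
    proof (rule DERIV_neg_imp_decreasing[OF s(1)])
      fix r assume r: "0 \<le> r" "r \<le> s"
      have "dist r 0 < d" using r s d by simp
      then have h: "Sf b g r - x/2 * Cf b g r < 0" "Cf b g r > 0" using dd by auto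
      have "x/2 * Cf b g r \<le> x' * Cf b g r" using x' h(2) by (simp add: mult_right_mono)
      then have "Sf b g r - x' * Cf b g r < 0" using h(1) by linarith
      then show "\<exists>y. (vv b g x' has_real_derivative y) (at r) \<and> y < 0"
        using vv_deriv[OF b] by blast
    qed
    then show "vv b g x' s < 0" by (simp add: vv0)
  qed
qed

lemma neg_before:
  assumes b: "b \<noteq> 0" and x: "0 < x" and t: "0 < t" "\<forall>s\<in>{0<..<t}. vv b g x s \<noteq> 0"
    and s: "0 < s" "s < t"
  shows "vv b g x s < 0"
proof -
  obtain d where d: "d > 0" and dd: "\<And>x' s. x/2 \<le> x' \<Longrightarrow> 0 < s \<Longrightarrow> s \<le> d \<Longrightarrow> vv b g x' s < 0"
    using small_s[OF b x] by blast
  show ?thesis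
  proof (cases "s \<le> d")
    case True
    then show ?thesis using dd[of x s] x s by simp
  next
    case False
    show ?thesis
    proof (rule ccontr)
      assume "\<not> vv b g x s < 0"
      then have "vv b g x d \<le> 0" "0 \<le> vv b g x s" using dd[of x d] x d by auto
      then obtain z where z: "d \<le> z" "z \<le> s" "vv b g x z = 0"
        using IVT'[of "vv b g x" d 0 s] False vv_cont[OF b] by auto
      have "z \<noteq> d" using dd[of x d] x d z by auto
      then have "z \<in> {0<..<t}" using z d s by auto
      then show False using t z by auto
    qed
  qed
qed



lemma T_cont:
  assumes b: "b \<noteq> 0" and x: "0 < x" and xc: "x < c"
    and dom: "\<forall>x'\<in>{0<..<c}. \<exists>y. first_return b g x' y"
  shows "isCont (Tr b g) x"
proof -
  have "x \<in> {0<..<c}" using x xc by simp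
  then obtain y where fr: "first_return b g x y" using dom by blast
  define t where "t = Tr b g x"
  have pc: "Pi b g x = y \<and> y = uu b g x t \<and> 0 < t \<and> vv b g x t = 0
     \<and> (\<forall>s\<in>{0<..<t}. vv b g x s \<noteq> 0) \<and> y < 0"
    using Pi_char[OF b fr] x unfolding t_def by simp
  then have t0: "0 < t" and vt: "vv b g x t = 0" and nz: "\<forall>s\<in>{0<..<t}. vv b g x s \<noteq> 0"
    and yu: "y = uu b g x t" and yneg: "y < 0" by auto
  have neg: "vv b g x s < 0" if "0 < s" "s < t" for s
    using neg_before[OF b x t0 nz that] .
  obtain d0 where d0: "d0 > 0" and dd0: "\<And>x' s. x/2 \<le> x' \<Longrightarrow> 0 < s \<Longrightarrow> s \<le> d0 \<Longrightarrow> vv b g x' s < 0"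
    using small_s[OF b x] by blast
  have dert: "(vv b g x has_real_derivative - y) (at t)"
    using vv_deriv[OF b, of g x t] vt yu by (simp add: uu_def)
  obtain dr where dr: "dr > 0" and ddr: "\<And>h. 0 < h \<Longrightarrow> h < dr \<Longrightarrow> vv b g x t < vv b g x (t + h)"
    using DERIV_pos_inc_right[OF dert] yneg by auto
  show ?thesis unfolding continuous_at_eps_delta
  proof (intro allI impI)
    fix e :: real assume e: "e > 0"
    define h where "h = min (e/2) (min (dr/2) (t/2))"
    have h: "0 < h" "h < e" "h < dr" "h \<le> t/2" using e dr t0 by (auto simp: h_def)
    have vth: "vv b g x (t + h) > 0" using ddr[of h] h vt by simp
    define d1 where "d1 = min d0 (t/4)"
    have d1: "0 < d1" "d1 \<le> d0" "d1 < t - h" using d0 t0 h by (auto simp: d1_def)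
    have Rne: "{d1..t-h} \<noteq> {}" using d1 by simp
    obtain m where m: "m \<in> {d1..t-h}" and mmax: "\<And>s. s \<in> {d1..t-h} \<Longrightarrow> vv b g x s \<le> vv b g x m"
      using continuous_attains_sup[OF compact_Icc Rne vv_cont[OF b]] by blast
    define M0 where "M0 = vv b g x m"
    have M0: "M0 < 0" unfolding M0_def using m d1 h by (intro neg) auto
    obtain k where k: "k \<in> {d1..t-h}" and kmax: "\<And>s. s \<in> {d1..t-h} \<Longrightarrow> \<bar>Sf b g s\<bar> \<le> \<bar>Sf b g k\<bar>"
      using continuous_attains_sup[OF compact_Icc Rne continuous_on_rabs[OF S_cont]] by blast
    define K1 where "K1 = \<bar>Sf b g k\<bar> + 1"
    have K1: "K1 > 0" by (simp add: K1_def add_nonneg_pos)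
    define V where "V = vv b g x (t + h)"
    define S1 where "S1 = \<bar>Sf b g (t + h)\<bar> + 1"
    have S1: "S1 > 0" by (simp add: S1_def add_nonneg_pos)
    define d where "d = min (x/2) (min (c - x) (min (- M0 / K1) (V / S1)))"
    have d: "0 < d" using x xc M0 K1 vth S1 by (auto simp: d_def V_def divide_neg_pos)
    show "\<exists>d>0. \<forall>x'. dist x' x < d \<longrightarrow> dist (Tr b g x') (Tr b g x) < e"
    proof (intro exI[of _ d] conjI allI impI d)
      fix x' assume "dist x' x < d"
      then have dx: "\<bar>x' - x\<bar> < d" by (simp add: dist_real_def)
      have "\<bar>x' - x\<bar> < x/2" "\<bar>x' - x\<bar> < c - x" using dx by (auto simp: d_def)
      then have x'1: "x/2 \<le> x'" "0 < x'" "x' < c" using x by arith+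
      have "\<bar>x' - x\<bar> < - (M0 / K1)" using dx by (simp add: d_def)
      then have "\<bar>x' - x\<bar> < (- M0) / K1" by (simp only: minus_divide_left)
      then have dxM: "\<bar>x' - x\<bar> * K1 < - M0" by (simp only: pos_less_divide_eq[OF K1])
      have "\<bar>x' - x\<bar> < V / S1" using dx by (simp add: d_def)
      then have dxV: "\<bar>x' - x\<bar> * S1 < V" by (simp only: pos_less_divide_eq[OF S1])
      have "x' \<in> {0<..<c}" using x'1 by simp
      then obtain y' where fr': "first_return b g x' y'" using dom by blast
      define t' where "t' = Tr b g x'"
      have pc': "0 < t' \<and> vv b g x' t' = 0 \<and> (\<forall>s\<in>{0<..<t'}. vv b g x' s \<noteq> 0)"
        using Pi_char[OF b fr'] x'1 unfolding t'_def by simp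
      have negx': "vv b g x' s < 0" if s: "0 < s" "s \<le> t - h" for s
      proof (cases "s \<le> d1")
        case True
        then show ?thesis using dd0[of x' s] x'1 s d1 by simp
      next
        case False
        then have sR: "s \<in> {d1..t-h}" using s by simp
        have "\<bar>(x' - x) * Sf b g s\<bar> \<le> \<bar>x' - x\<bar> * K1"
        proof -
          have "\<bar>Sf b g s\<bar> \<le> K1" using kmax[OF sR] by (simp add: K1_def)
          then show ?thesis by (simp add: abs_mult mult_left_mono)
        qed
        moreover have "vv b g x s \<le> M0" using mmax[OF sR] by (simp add: M0_def)
        ultimately show ?thesis using dxM vv_shift[of b g x' s x] by linarith
      qed
      have vth': "vv b g x' (t + h) > 0"
      proof -
        have "\<bar>(x' - x) * Sf b g (t + h)\<bar> \<le> \<bar>x' - x\<bar> * S1"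
          by (simp add: abs_mult mult_left_mono S1_def)
        then show ?thesis using dxV vv_shift[of b g x' "t + h" x] unfolding V_def by linarith
      qed
      have lo: "t' > t - h"
      proof (rule ccontr)
        assume "\<not> t' > t - h"
        then show False using negx'[of t'] pc' by auto
      qed
      have hi: "t' < t + h"
      proof (rule ccontr)
        assume "\<not> t' < t + h"
        then have ge: "t + h \<le> t'" by simp
        have "t + h \<noteq> t'" using pc' vth' by auto
        then have lt: "t + h < t'" using ge by simp
        have "vv b g x' d1 \<le> 0" using dd0[of x' d1] x'1 d1 by simp
        then obtain z where z: "d1 \<le> z" "z \<le> t + h" "vv b g x' z = 0"
          using IVT'[of "vv b g x'" d1 0 "t + h"] vth' d1 h vv_cont[OF b] by auto
        then have "z \<in> {0<..<t'}" using d1 lt by auto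
        then show False using pc' z by auto
      qed
      show "dist (Tr b g x') (Tr b g x) < e"
        using lo hi h unfolding t'_def[symmetric] t_def[symmetric] dist_real_def by auto
    qed
  qed
qed



lemma a_deriv: "b \<noteq> 0 \<Longrightarrow> ((\<lambda>s. (1 - Cf b g s + g * Sf b g s) / b) has_real_derivative Sf b g s) (at s)"
  by (auto intro!: derivative_eq_intros SC(3,4) simp: field_simps)

lemma Pi_facts:
  assumes b: "b \<noteq> 0" and x: "0 < x" and fr: "first_return b g x y"
  shows "Pi b g x = y \<and> y < 0 \<and> 0 < Tr b g x \<and> y = x * Cf b g (Tr b g x) - Sf b g (Tr b g x)
    \<and> (1 - Cf b g (Tr b g x) + g * Sf b g (Tr b g x)) / b = x * Sf b g (Tr b g x)
    \<and> Sf b g (Tr b g x) \<noteq> 0"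
proof -
  define t where "t = Tr b g x"
  have pc: "Pi b g x = y \<and> y = uu b g x t \<and> 0 < t \<and> vv b g x t = 0 \<and> y < 0"
    using Pi_char[OF b fr] x unfolding t_def by simp
  then have y1: "y = x * Cf b g t - Sf b g t" by (simp add: uu_def)
  have a1: "(1 - Cf b g t + g * Sf b g t) / b = x * Sf b g t" using pc by (simp add: vv_def)
  have "Sf b g t \<noteq> 0"
  proof
    assume S0: "Sf b g t = 0"
    then have "Cf b g t = 1" using a1 b by simp
    then have "y = x" using y1 S0 by simp
    then show False using pc x by simp
  qed
  then show ?thesis using pc y1 a1 unfolding t_def by simp
qed

lemma Pi_deriv:
  assumes b: "b \<noteq> 0" and x: "0 < x" and xc: "x < c"
    and dom: "\<forall>x'\<in>{0<..<c}. \<exists>y. first_return b g x' y"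
  shows "(Pi b g has_real_derivative
     Cf b g (Tr b g x) + (x * (g * Cf b g (Tr b g x) - b * Sf b g (Tr b g x)) - Cf b g (Tr b g x))
        * (- Sf b g (Tr b g x) / Pi b g x)) (at x)"
proof -
  define R where "R s = ((1 - Cf b g s + g * Sf b g s) / b) / Sf b g s" for s
  define G where "G x' = x' * Cf b g (Tr b g x') - Sf b g (Tr b g x')" for x'
  have facts: "Pi b g x' = G x' \<and> R (Tr b g x') = x' \<and> Pi b g x' < 0 \<and> Sf b g (Tr b g x') \<noteq> 0
     \<and> (1 - Cf b g (Tr b g x') + g * Sf b g (Tr b g x')) / b = x' * Sf b g (Tr b g x')"
    if x': "0 < x'" "x' < c" for x'
  proof -
    have "x' \<in> {0<..<c}" using x' by simp
    then obtain y' where fr': "first_return b g x' y'" using dom by blast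
    show ?thesis using Pi_facts[OF b x'(1) fr'] unfolding G_def R_def by auto
  qed
  define t where "t = Tr b g x"
  define y where "y = Pi b g x"
  have fx: "y = G x" "y < 0" "Sf b g t \<noteq> 0" "(1 - Cf b g t + g * Sf b g t) / b = x * Sf b g t"
    using facts[OF x xc] unfolding t_def y_def by auto
  have ySC: "y = x * Cf b g t - Sf b g t" using fx(1) unfolding G_def t_def by simp
  have dR: "(R has_real_derivative (Sf b g t * Sf b g t - ((1 - Cf b g t + g * Sf b g t) / b) * Cf b g t)
      / (Sf b g t * Sf b g t)) (at t)"
    unfolding R_def[abs_def] by (rule DERIV_divide[OF a_deriv[OF b] SC(3) fx(3)])
  define D where "D = (Sf b g t * Sf b g t - ((1 - Cf b g t + g * Sf b g t) / b) * Cf b g t)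
      / (Sf b g t * Sf b g t)"
  have Dv: "D = - y / Sf b g t"
  proof -
    have "D = (Sf b g t * Sf b g t - x * Sf b g t * Cf b g t) / (Sf b g t * Sf b g t)"
      unfolding D_def fx(4) by simp
    also have "\<dots> = (Sf b g t - x * Cf b g t) / Sf b g t" using fx(3) by (simp add: field_simps)
    also have "Sf b g t - x * Cf b g t = - y" using ySC by simp
    finally show ?thesis by simp
  qed
  have Dnz: "D \<noteq> 0" using Dv fx by simp
  have dT: "(Tr b g has_real_derivative inverse D) (at x)"
  proof (rule DERIV_inverse_function[where f=R and a=0 and b=c])
    show "(R has_real_derivative D) (at (Tr b g x))" using dR unfolding D_def t_def .
    show "D \<noteq> 0" by fact
    show "0 < x" "x < c" by fact+
    show "\<And>y. 0 < y \<Longrightarrow> y < c \<Longrightarrow> R (Tr b g y) = y" using facts by blast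
    show "isCont (Tr b g) x" by (rule T_cont[OF b x xc dom])
  qed
  have invD: "inverse D = - Sf b g t / y"
  proof -
    have "y \<noteq> 0" using fx by simp
    then show ?thesis unfolding Dv using fx(3) by (simp add: inverse_eq_divide)
  qed
  have dG: "(G has_real_derivative Cf b g t + (x * (g * Cf b g t - b * Sf b g t) - Cf b g t) * inverse D) (at x)"
  proof -
    have c1: "((\<lambda>x'. Cf b g (Tr b g x')) has_real_derivative (g * Cf b g t - b * Sf b g t) * inverse D) (at x)"
      using DERIV_chain2[OF SC(4) dT] unfolding t_def .
    have s1: "((\<lambda>x'. Sf b g (Tr b g x')) has_real_derivative Cf b g t * inverse D) (at x)"
      using DERIV_chain2[OF SC(3) dT] unfolding t_def .
    have "(G has_real_derivative (1 * Cf b g t + x * ((g * Cf b g t - b * Sf b g t) * inverse D)) - Cf b g t * inverse D) (at x)"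
      unfolding G_def[abs_def] using DERIV_diff[OF DERIV_mult[OF DERIV_ident c1] s1] unfolding t_def by (simp add: mult.commute)
    then show ?thesis by (simp add: algebra_simps)
  qed
  have ev: "eventually (\<lambda>x'. Pi b g x' = G x') (nhds x)"
  proof -
    have "eventually (\<lambda>x'. x' \<in> {0<..<c}) (nhds x)"
      using x xc by (intro eventually_nhds_in_open) auto
    then show ?thesis by eventually_elim (use facts in auto)
  qed
  have "(Pi b g has_real_derivative Cf b g t + (x * (g * Cf b g t - b * Sf b g t) - Cf b g t) * inverse D) (at x)"
    using dG DERIV_cong_ev[OF refl ev refl] by blast
  then show ?thesis unfolding invD t_def y_def .
qed



lemma int_deriv:
  fixes p f :: "real \<Rightarrow> real"
  assumes cf: "continuous_on {a0..b0} f"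
    and dp: "(p has_real_derivative P) (at x)"
    and r: "a0 < p x" "p x < x" "x < b0"
  shows "((\<lambda>z. integral {p z..z} f) has_real_derivative f x - f (p x) * P) (at x)"
proof -
  define F where "F z = integral {a0..z} f" for z
  have dF: "(F has_real_derivative f z) (at z)" if "a0 < z" "z < b0" for z
  proof -
    have "(F has_vector_derivative f z) (at z within {a0..b0})"
      unfolding F_def[abs_def] by (rule integral_has_vector_derivative[OF cf]) (use that in auto)
    then have "(F has_vector_derivative f z) (at z)" using at_within_Icc_at[OF that] by simp
    then show ?thesis by (simp add: has_real_derivative_iff_has_vector_derivative)
  qed
  have d1: "((\<lambda>z. F z - F (p z)) has_real_derivative f x - f (p x) * P) (at x)"
    using DERIV_diff[OF dF DERIV_chain2[OF dF dp]] r by auto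
  have cp: "isCont p x" using DERIV_isCont[OF dp] .
  have tp: "(p \<longlongrightarrow> p x) (nhds x)"
    using cp tendsto_at_iff_tendsto_nhds[of p x] unfolding isCont_def by simp
  have cq: "isCont (\<lambda>z. z - p z) x" using cp by (intro continuous_intros)
  have tq: "((\<lambda>z. z - p z) \<longlongrightarrow> x - p x) (nhds x)"
    using cq tendsto_at_iff_tendsto_nhds[of "\<lambda>z. z - p z" x] unfolding isCont_def by simp
  have e1: "eventually (\<lambda>z. a0 < p z) (nhds x)" using order_tendstoD(1)[OF tp r(1)] .
  have e2: "eventually (\<lambda>z. 0 < z - p z) (nhds x)" using order_tendstoD(1)[OF tq, of 0] r(2) by simp
  have e3: "eventually (\<lambda>z. z \<in> {a0<..<b0}) (nhds x)"
    using r by (intro eventually_nhds_in_open) auto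
  have ev: "eventually (\<lambda>z. integral {p z..z} f = F z - F (p z)) (nhds x)"
    using e1 e2 e3
  proof eventually_elim
    case (elim z)
    have int: "f integrable_on {a0..z}"
      using cf elim by (intro integrable_continuous_real) (auto intro: continuous_on_subset)
    have "integral {a0..p z} f + integral {p z..z} f = integral {a0..z} f"
      using elim by (intro Henstock_Kurzweil_Integration.integral_combine[OF _ _ int]) auto
    then show ?case unfolding F_def by simp
  qed
  show ?thesis using d1 DERIV_cong_ev[OF refl ev refl] by blast
qed

lemma affine_pos:
  fixes A B p q u :: real
  assumes "p \<le> u" "u \<le> q" "0 < A + B*p" "0 < A + B*q"
  shows "0 < A + B*u"
proof (cases "B \<ge> 0")
  case True
  then have "B*p \<le> B*u" using assms by (simp add: mult_left_mono)
  then show ?thesis using assms by linarith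
next
  case False
  then have "B*q \<le> B*u" using assms by (simp add: mult_left_mono_neg)
  then show ?thesis using assms by linarith
qed



lemma alg1:
  fixes b g x y C S :: real
  assumes b: "b \<noteq> 0" and y: "y \<noteq> 0" and a: "(1 - C + g*S)/b = x*S" and ys: "y = x*C - S"
  shows "y * (C + (x*(g*C - b*S) - C) * (- S / y)) = y*C + S - g*y*S"
proof -
  have a': "1 - C + g*S = b*x*S" using a b by (simp add: field_simps)
  have q: "x*(g*C - b*S) - C = g*y - 1" unfolding ys using a' by (simp add: algebra_simps)
  have "y * (C + (x*(g*C - b*S) - C) * (- S / y)) = y * (C + (g*y - 1) * (- S / y))"
    by (simp only: q)
  also have "\<dots> = y*C - (g*y - 1) * S" using y by (simp add: field_simps)
  finally show ?thesis by (simp add: algebra_simps)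
qed

lemma alg2:
  fixes b g x y C S :: real
  assumes b: "b \<noteq> 0" and a: "(1 - C + g*S)/b = x*S" and ys: "y = x*C - S"
  shows "(y*C + S - g*y*S) * Wq b g x = x * Wq b g y"
proof -
  have C: "C = 1 + g*S - b*x*S" using a b by (simp add: field_simps)
  have y2: "y = x - Wq b g x * S" unfolding ys C Wq_def by (simp add: algebra_simps)
  have e: "y*C + S - g*y*S = y + S*(1 - b*x*y)" unfolding C by (simp add: algebra_simps)
  have "(y*C + S - g*y*S) * Wq b g x = (y + S*(1 - b*x*y)) * Wq b g x"
    by (simp only: e)
  also have "\<dots> = y * Wq b g x + (Wq b g x * S) * (1 - b*x*y)"
    by (simp add: algebra_simps)
  also have "Wq b g x * S = x - y" using y2 by simp
  finally show ?thesis unfolding Wq_def by (simp add: algebra_simps)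
qed

lemma alg3:
  fixes B ap dp bm gm x y Pq :: real
  assumes dp: "1 + dp > 0" and X1: "Xsl B ap dp x > 0" and X2: "Xsl B ap dp y > 0"
    and W: "Wq bm gm x > 0" and Pq: "Pq * Wq bm gm x = x * Wq bm gm y"
  shows "(x / Xsl B ap dp x - Pq / Xsl B ap dp y) * (Xsl B ap dp x * Xsl B ap dp y * Wq bm gm x * (1 + dp))
    = x * (x - y) * Deltabar B ap dp bm gm x y"
proof -
  define X where "X = Xsl B ap dp x"
  define Y where "Y = Xsl B ap dp y"
  define Wx where "Wx = Wq bm gm x"
  define Wy where "Wy = Wq bm gm y"
  have X0: "X \<noteq> 0" "Y \<noteq> 0" using X1 X2 unfolding X_def Y_def by auto
  have X1': "X * (1 + dp) = B - dp + ap*x" using dp unfolding X_def Xsl_def by simp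
  have Y1': "Y * (1 + dp) = B - dp + ap*y" using dp unfolding Y_def Xsl_def by simp
  have "(x / X - Pq / Y) * (X * Y * Wx * (1 + dp)) = (x * Y * Wx - (Pq * Wx) * X) * (1 + dp)"
    using X0 by (simp add: field_simps)
  also have "\<dots> = x * ((Y * (1 + dp)) * Wx - (X * (1 + dp)) * Wy)"
    using Pq unfolding Wx_def Wy_def by (simp add: algebra_simps)
  also have "\<dots> = x * ((B - dp + ap*y) * Wx - (B - dp + ap*x) * Wy)"
    unfolding X1' Y1' ..
  also have "(B - dp + ap*y) * Wx - (B - dp + ap*x) * Wy = (x - y) * Deltabar B ap dp bm gm x y"
    unfolding Wx_def Wy_def Wq_def Deltabar_def by (simp add: algebra_simps)
  finally show ?thesis unfolding X_def Y_def Wx_def Wy_def by (simp add: algebra_simps)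
qed



lemma Deltabar_lin:
  "Deltabar B ap dp bm gm x y = (bm * (ap*x + (B - dp))) * y + (bm*(B-dp)*x - ap - gm*(B-dp))"
  unfolding Deltabar_def by (simp add: algebra_simps)

lemma root_lemma:
  assumes bm: "bm \<noteq> 0" and dp: "dp > 0" and X: "Xsl B ap dp x > 0"
  shows "((\<forall>y. Deltabar B ap dp bm gm x y = 0 \<longrightarrow> y > Pi bm gm x) \<longrightarrow>
           (bm < 0 \<longrightarrow> Delta B ap dp bm gm x > 0) \<and> (bm > 0 \<longrightarrow> Delta B ap dp bm gm x < 0))
       \<and> ((\<forall>y. Deltabar B ap dp bm gm x y = 0 \<longrightarrow> y < Pi bm gm x) \<longrightarrow>
           (bm < 0 \<longrightarrow> Delta B ap dp bm gm x < 0) \<and> (bm > 0 \<longrightarrow> Delta B ap dp bm gm x > 0))"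
proof -
  define K where "K = bm * (ap*x + (B - dp))"
  define L where "L = bm*(B-dp)*x - ap - gm*(B-dp)"
  have N: "ap*x + (B - dp) > 0"
  proof -
    have "(B - dp + ap * x) / (1 + dp) > 0" using X unfolding Xsl_def .
    then show ?thesis using dp by (simp add: zero_less_divide_iff add.commute)
  qed
  have K0: "K \<noteq> 0" unfolding K_def using bm N by simp
  define y0 where "y0 = - L / K"
  have root: "Deltabar B ap dp bm gm x y0 = 0"
    unfolding Deltabar_lin K_def[symmetric] L_def[symmetric] y0_def using K0 by simp
  have De: "Delta B ap dp bm gm x = K * (Pi bm gm x - y0)"
    unfolding Delta_def Deltabar_lin K_def[symmetric] L_def[symmetric] y0_def using K0
    by (simp add: algebra_simps)
  have Ks: "(bm < 0 \<longrightarrow> K < 0) \<and> (bm > 0 \<longrightarrow> K > 0)"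
    unfolding K_def using N by (auto simp: mult_neg_pos)
  show ?thesis
  proof (intro conjI impI)
    assume h: "\<forall>y. Deltabar B ap dp bm gm x y = 0 \<longrightarrow> y > Pi bm gm x"
    then have "y0 > Pi bm gm x" using root by blast
    then have d: "Pi bm gm x - y0 < 0" by simp
    show "bm < 0 \<Longrightarrow> Delta B ap dp bm gm x > 0" using Ks d unfolding De by (simp add: mult_neg_neg)
    show "bm > 0 \<Longrightarrow> Delta B ap dp bm gm x < 0" using Ks d unfolding De by (simp add: mult_pos_neg)
  next
    assume h: "\<forall>y. Deltabar B ap dp bm gm x y = 0 \<longrightarrow> y < Pi bm gm x"
    then have "y0 < Pi bm gm x" using root by blast
    then have d: "Pi bm gm x - y0 > 0" by simp
    show "bm < 0 \<Longrightarrow> Delta B ap dp bm gm x < 0" using Ks d unfolding De by (simp add: mult_neg_pos)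
    show "bm > 0 \<Longrightarrow> Delta B ap dp bm gm x > 0" using Ks d unfolding De by (simp add: mult_pos_pos)
  qed
qed

lemma sgn_mult_pos:
  fixes D K :: real
  assumes "K > 0"
  shows "(0 < D * K \<longleftrightarrow> 0 < D) \<and> (D * K < 0 \<longleftrightarrow> D < 0) \<and> (0 < K * D \<longleftrightarrow> 0 < D) \<and> (K * D < 0 \<longleftrightarrow> D < 0)"
  using assms by (simp add: zero_less_mult_iff mult_less_0_iff)

lemma pointwise:
  assumes Bd: "B > dp" and dp: "dp > 0" and b: "bm \<noteq> 0" and g: "gm > 0"
    and xin: "in_zero_b B ap dp bm gm x"
  shows "Xsl B ap dp x > 0 \<and> (\<exists>D. (Itilde B ap dp bm gm has_real_derivative D) (at x)
    \<and> (0 < D \<longleftrightarrow> 0 < Delta B ap dp bm gm x) \<and> (D < 0 \<longleftrightarrow> Delta B ap dp bm gm x < 0))"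
proof -
  obtain c where x: "0 < x" "x < c" and sub: "{0..<c} \<subseteq> goodset B ap dp bm gm"
    using xin unfolding in_zero_b_def by blast
  have dom: "\<forall>x'\<in>{0<..<c}. \<exists>y. first_return bm gm x' y"
  proof
    fix x' assume x': "x' \<in> {0<..<c}"
    then have "x' \<in> goodset B ap dp bm gm" using sub by auto
    then have "x' \<in> PiDom bm gm" unfolding goodset_def by simp
    then show "\<exists>y. first_return bm gm x' y" using x' unfolding PiDom_def by auto
  qed
  have "x \<in> goodset B ap dp bm gm" using sub x by auto
  then have good: "\<forall>u\<in>{Pi bm gm x..x}. 0 < Xsl B ap dp u" unfolding goodset_def by simp
  have "x \<in> {0<..<c}" using x by simp
  then obtain y where fr: "first_return bm gm x y" using dom by blast
  define t where "t = Tr bm gm x"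
  define C where "C = Cf bm gm t"
  define S where "S = Sf bm gm t"
  have pf: "Pi bm gm x = y \<and> y < 0 \<and> 0 < t \<and> y = x * C - S \<and> (1 - C + gm * S) / bm = x * S \<and> S \<noteq> 0"
    using Pi_facts[OF b x(1) fr] unfolding t_def C_def S_def .
  have pc: "vv bm gm x t = 0 \<and> y = uu bm gm x t"
    using Pi_char[OF b fr] x unfolding t_def by simp
  have Wx: "Wq bm gm x > 0" using W_pos[OF b g x(1), of t] pc pf by simp
  have dP: "(Pi bm gm has_real_derivative C + (x * (gm * C - bm * S) - C) * (- S / y)) (at x)"
    using Pi_deriv[OF b x dom] pf unfolding t_def[symmetric] C_def[symmetric] S_def[symmetric] by simp
  define P where "P = C + (x * (gm * C - bm * S) - C) * (- S / y)"
  have Xx: "Xsl B ap dp x > 0" using good pf x by auto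
  have Xy: "Xsl B ap dp y > 0" using good pf x by auto
  have Xaff: "Xsl B ap dp u = (B - dp)/(1+dp) + ap/(1+dp) * u" for u
    unfolding Xsl_def by (simp add: add_divide_distrib)
  have cX: "isCont (Xsl B ap dp) u" for u unfolding Xsl_def[abs_def] using dp by (intro continuous_intros) auto
  have tX: "(Xsl B ap dp \<longlongrightarrow> Xsl B ap dp u) (nhds u)" for u
    using cX[of u] tendsto_at_iff_tendsto_nhds[of "Xsl B ap dp" u] unfolding isCont_def by simp
  obtain d1 where d1: "d1 > 0" and dd1: "\<And>u. dist u y < d1 \<Longrightarrow> Xsl B ap dp u > 0"
    using order_tendstoD(1)[OF tX[of y] Xy] unfolding eventually_nhds_metric by blast
  obtain d2 where d2: "d2 > 0" and dd2: "\<And>u. dist u x < d2 \<Longrightarrow> Xsl B ap dp u > 0"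
    using order_tendstoD(1)[OF tX[of x] Xx] unfolding eventually_nhds_metric by blast
  define a0 where "a0 = y - d1/2"
  define b0 where "b0 = x + d2/2"
  have a0p: "Xsl B ap dp a0 > 0" using dd1[of a0] d1 by (simp add: a0_def dist_real_def)
  have b0p: "Xsl B ap dp b0 > 0" using dd2[of b0] d2 by (simp add: b0_def dist_real_def)
  have Xpos: "Xsl B ap dp u > 0" if "a0 \<le> u" "u \<le> b0" for u
    using affine_pos[of a0 u b0 "(B - dp)/(1+dp)" "ap/(1+dp)"] that a0p b0p unfolding Xaff by simp
  have cf: "continuous_on {a0..b0} (\<lambda>u. u / Xsl B ap dp u)"
  proof (intro continuous_on_divide continuous_on_id continuous_at_imp_continuous_on ballI cX)
    fix u assume "u \<in> {a0..b0}"
    then show "Xsl B ap dp u \<noteq> 0" using Xpos[of u] by auto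
  qed
  have dI: "((\<lambda>z. integral {Pi bm gm z..z} (\<lambda>u. u / Xsl B ap dp u)) has_real_derivative
      x / Xsl B ap dp x - Pi bm gm x / Xsl B ap dp (Pi bm gm x) * P) (at x)"
    unfolding P_def
    by (rule int_deriv[OF cf dP]) (use pf d1 d2 x in \<open>auto simp: a0_def b0_def\<close>)
  have Iteq: "Itilde B ap dp bm gm = (\<lambda>z. integral {Pi bm gm z..z} (\<lambda>u. u / Xsl B ap dp u))"
    by (rule ext) (simp add: Itilde_def)
  define D where "D = x / Xsl B ap dp x - Pi bm gm x / Xsl B ap dp (Pi bm gm x) * P"
  define Pq where "Pq = y*C + S - gm*y*S"
  have yP: "y * P = Pq" unfolding P_def Pq_def using alg1[OF b _ _ ] pf by auto
  have Pq: "Pq * Wq bm gm x = x * Wq bm gm y" unfolding Pq_def using alg2[OF b] pf by auto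
  have D2: "D = x / Xsl B ap dp x - Pq / Xsl B ap dp y"
    unfolding D_def using pf yP[symmetric] by simp
  have key: "D * (Xsl B ap dp x * Xsl B ap dp y * Wq bm gm x * (1 + dp))
    = x * (x - y) * Delta B ap dp bm gm x"
    unfolding D2 Delta_def using alg3[OF _ Xx Xy Wx Pq] dp pf by simp
  have pos1: "Xsl B ap dp x * Xsl B ap dp y * Wq bm gm x * (1 + dp) > 0"
    using Xx Xy Wx dp by simp
  have pos2: "x * (x - y) > 0" using x pf by simp
  have s1: "0 < D \<longleftrightarrow> 0 < Delta B ap dp bm gm x"
  proof -
    have "0 < D \<longleftrightarrow> 0 < D * (Xsl B ap dp x * Xsl B ap dp y * Wq bm gm x * (1 + dp))"
      using sgn_mult_pos[OF pos1] by simp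
    also have "\<dots> \<longleftrightarrow> 0 < x * (x - y) * Delta B ap dp bm gm x" unfolding key ..
    also have "\<dots> \<longleftrightarrow> 0 < Delta B ap dp bm gm x" using sgn_mult_pos[OF pos2] by simp
    finally show ?thesis .
  qed
  have s2: "D < 0 \<longleftrightarrow> Delta B ap dp bm gm x < 0"
  proof -
    have "D < 0 \<longleftrightarrow> D * (Xsl B ap dp x * Xsl B ap dp y * Wq bm gm x * (1 + dp)) < 0"
      using sgn_mult_pos[OF pos1] by simp
    also have "\<dots> \<longleftrightarrow> x * (x - y) * Delta B ap dp bm gm x < 0" unfolding key ..
    also have "\<dots> \<longleftrightarrow> Delta B ap dp bm gm x < 0" using sgn_mult_pos[OF pos2] by simp
    finally show ?thesis .
  qed
  show ?thesis using Xx dI s1 s2 unfolding Iteq D_def by blast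
qed


theorem lemma3p2:
  fixes B ap bp gp dp bm gm :: real and J :: "real set"
  assumes "B > dp" and "dp > 0"
    and "bm \<noteq> 0" and "gm > 0"
    and "is_interval J"
    and "\<forall>x\<in>J. in_zero_b B ap dp bm gm x"
  shows
   "(bm < 0 \<longrightarrow>
      ((\<forall>x\<in>J. \<forall>y. Deltabar B ap dp bm gm x y = 0 \<longrightarrow> y > Pi bm gm x) \<longrightarrow>
         (\<forall>x\<in>J. Delta B ap dp bm gm x > 0 \<and>
            (\<exists>D. (Itilde B ap dp bm gm has_real_derivative D) (at x) \<and> D > 0))) \<and>
      ((\<forall>x\<in>J. \<forall>y. Deltabar B ap dp bm gm x y = 0 \<longrightarrow> y < Pi bm gm x) \<longrightarrow>
         (\<forall>x\<in>J. Delta B ap dp bm gm x < 0 \<and>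
            (\<exists>D. (Itilde B ap dp bm gm has_real_derivative D) (at x) \<and> D < 0)))) \<and>
    (bm > 0 \<longrightarrow>
      ((\<forall>x\<in>J. \<forall>y. Deltabar B ap dp bm gm x y = 0 \<longrightarrow> y > Pi bm gm x) \<longrightarrow>
         (\<forall>x\<in>J. Delta B ap dp bm gm x < 0 \<and>
            (\<exists>D. (Itilde B ap dp bm gm has_real_derivative D) (at x) \<and> D < 0))) \<and>
      ((\<forall>x\<in>J. \<forall>y. Deltabar B ap dp bm gm x y = 0 \<longrightarrow> y < Pi bm gm x) \<longrightarrow>
         (\<forall>x\<in>J. Delta B ap dp bm gm x > 0 \<and>
            (\<exists>D. (Itilde B ap dp bm gm has_real_derivative D) (at x) \<and> D > 0))))"
  proof -
  have key: "\<exists>D. (Itilde B ap dp bm gm has_real_derivative D) (at x)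
    \<and> (0 < D \<longleftrightarrow> 0 < Delta B ap dp bm gm x) \<and> (D < 0 \<longleftrightarrow> Delta B ap dp bm gm x < 0)"
    if xJ: "x \<in> J" for x
    using pointwise[OF assms(1-4)] assms(6) xJ by blast
  have rl: "((\<forall>y. Deltabar B ap dp bm gm x y = 0 \<longrightarrow> y > Pi bm gm x) \<longrightarrow>
           (bm < 0 \<longrightarrow> Delta B ap dp bm gm x > 0) \<and> (bm > 0 \<longrightarrow> Delta B ap dp bm gm x < 0))
       \<and> ((\<forall>y. Deltabar B ap dp bm gm x y = 0 \<longrightarrow> y < Pi bm gm x) \<longrightarrow>
           (bm < 0 \<longrightarrow> Delta B ap dp bm gm x < 0) \<and> (bm > 0 \<longrightarrow> Delta B ap dp bm gm x > 0))"
    if xJ: "x \<in> J" for x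
  proof -
    have "Xsl B ap dp x > 0" using pointwise[OF assms(1-4)] assms(6) xJ by blast
    then show ?thesis using root_lemma[OF assms(3)] assms(2) by blast
  qed
  show ?thesis
  proof (intro conjI impI)
    assume bm: "bm < 0" and H: "\<forall>x\<in>J. \<forall>y. Deltabar B ap dp bm gm x y = 0 \<longrightarrow> y > Pi bm gm x"
    show "\<forall>x\<in>J. Delta B ap dp bm gm x > 0 \<and>
            (\<exists>D. (Itilde B ap dp bm gm has_real_derivative D) (at x) \<and> D > 0)"
    proof
      fix x assume xJ: "x \<in> J"
      have d: "Delta B ap dp bm gm x > 0" using rl[OF xJ] H xJ bm by blast
      then show "Delta B ap dp bm gm x > 0 \<and>
            (\<exists>D. (Itilde B ap dp bm gm has_real_derivative D) (at x) \<and> D > 0)"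
        using key[OF xJ] by blast
    qed
  next
    assume bm: "bm < 0" and H: "\<forall>x\<in>J. \<forall>y. Deltabar B ap dp bm gm x y = 0 \<longrightarrow> y < Pi bm gm x"
    show "\<forall>x\<in>J. Delta B ap dp bm gm x < 0 \<and>
            (\<exists>D. (Itilde B ap dp bm gm has_real_derivative D) (at x) \<and> D < 0)"
    proof
      fix x assume xJ: "x \<in> J"
      have d: "Delta B ap dp bm gm x < 0" using rl[OF xJ] H xJ bm by blast
      then show "Delta B ap dp bm gm x < 0 \<and>
            (\<exists>D. (Itilde B ap dp bm gm has_real_derivative D) (at x) \<and> D < 0)"
        using key[OF xJ] by blast
    qed
  next
    assume bm: "bm > 0" and H: "\<forall>x\<in>J. \<forall>y. Deltabar B ap dp bm gm x y = 0 \<longrightarrow> y > Pi bm gm x"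
    show "\<forall>x\<in>J. Delta B ap dp bm gm x < 0 \<and>
            (\<exists>D. (Itilde B ap dp bm gm has_real_derivative D) (at x) \<and> D < 0)"
    proof
      fix x assume xJ: "x \<in> J"
      have d: "Delta B ap dp bm gm x < 0" using rl[OF xJ] H xJ bm by blast
      then show "Delta B ap dp bm gm x < 0 \<and>
            (\<exists>D. (Itilde B ap dp bm gm has_real_derivative D) (at x) \<and> D < 0)"
        using key[OF xJ] by blast
    qed
  next
    assume bm: "bm > 0" and H: "\<forall>x\<in>J. \<forall>y. Deltabar B ap dp bm gm x y = 0 \<longrightarrow> y < Pi bm gm x"
    show "\<forall>x\<in>J. Delta B ap dp bm gm x > 0 \<and>
            (\<exists>D. (Itilde B ap dp bm gm has_real_derivative D) (at x) \<and> D > 0)"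
    proof
      fix x assume xJ: "x \<in> J"
      have d: "Delta B ap dp bm gm x > 0" using rl[OF xJ] H xJ bm by blast
      then show "Delta B ap dp bm gm x > 0 \<and>
            (\<exists>D. (Itilde B ap dp bm gm has_real_derivative D) (at x) \<and> D > 0)"
        using key[OF xJ] by blast
    qed
  qed
qed

end
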